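(* Let $(q,E)$ be an annotated CQ for which there exists a CQ $q'$ that fits $E$ with $q\subseteq q'$. Then there is, up to equivalence, exactly one $\preceq^{\mathrm{cod}}$-generalization for $(q,E)$.
   Context: An annotated CQ $(q,E)$ consists of a $k$-ary conjunctive query $q$ (relational atoms, no constants, every answer variable occurring in an atom) and a collection $E=(E^+,E^-)$ of labeled data examples of arity $k$, where a data example is $(I,\mathbf a)$ with $I$ a finite instance and $\mathbf a$ a $k$-tuple of its values. $[\![q]\!]$ is the set of data examples $(I,\mathbf a)$ with $\mathbf a\in q(I)$; $q$ fits $E$ if $E^+\subseteq[\![q]\!]$ and $E^-\cap[\![q]\!]=\emptyset$; $\subseteq$ is query containment and $\equiv$ equivalence. $q_1\preceq^{\mathrm{cod}}_q q_2$ iff $[\![q]\!]\oplus[\![q_1]\!]\subseteq[\![q]\!]\oplus[\![q_2]\!]$ ($\oplus$ = symmetric difference), $\prec_q$ its strict part. A $\preceq^{\mathrm{cod}}$-generalization for $(q,E)$ is a CQ $q'$ fitting $E$ with $q\subseteq q'$ such that no CQ $q''$ fitting $E$ with $q\subseteq q''$ has $q''\prec^{\mathrm{cod}}_q q'$. Candidate queries range over CQs using only the relation symbols occurring in $q$ and $E$. *)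

theory Defs
  imports Main
begin

type_synonym 'r fact = "'r \<times> nat list"
type_synonym 'r inst = "'r fact set"
type_synonym 'r dexample = "'r inst \<times> nat list"

type_synonym 'r cq = "nat list \<times> 'r fact set"

definition ans :: "'r cq \<Rightarrow> nat list" where "ans q = fst q"
definition body :: "'r cq \<Rightarrow> 'r fact set" where "body q = snd q"

definition adom :: "'r inst \<Rightarrow> nat set" where
  "adom I = (\<Union>(R, xs)\<in>I. set xs)"

definition rels :: "'r fact set \<Rightarrow> 'r set" where
  "rels A = fst ` A"

definition wf_inst :: "('r \<Rightarrow> nat) \<Rightarrow> 'r inst \<Rightarrow> bool" where
  "wf_inst ar I \<longleftrightarrow> finite I \<and> (\<forall>(R, xs)\<in>I. length xs = ar R)"

definition wf_cq :: "('r \<Rightarrow> nat) \<Rightarrow> nat \<Rightarrow> 'r cq \<Rightarrow> bool" where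
  "wf_cq ar k q \<longleftrightarrow> length (ans q) = k \<and> finite (body q)
     \<and> (\<forall>(R, xs)\<in>body q. length xs = ar R) \<and> set (ans q) \<subseteq> adom (body q)"

definition data_example :: "('r \<Rightarrow> nat) \<Rightarrow> nat \<Rightarrow> 'r dexample \<Rightarrow> bool" where
  "data_example ar k e \<longleftrightarrow> wf_inst ar (fst e) \<and> length (snd e) = k \<and> set (snd e) \<subseteq> adom (fst e)"

definition answers :: "'r cq \<Rightarrow> 'r inst \<Rightarrow> nat list set" where
  "answers q I = {map h (ans q) | h. \<forall>(R, xs)\<in>body q. (R, map h xs) \<in> I}"

definition sem :: "('r \<Rightarrow> nat) \<Rightarrow> nat \<Rightarrow> 'r cq \<Rightarrow> 'r dexample set" where
  "sem ar k q = {e. data_example ar k e \<and> snd e \<in> answers q (fst e)}"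

definition fits :: "('r \<Rightarrow> nat) \<Rightarrow> nat \<Rightarrow> 'r cq \<Rightarrow> 'r dexample set \<times> 'r dexample set \<Rightarrow> bool" where
  "fits ar k q E \<longleftrightarrow> fst E \<subseteq> sem ar k q \<and> snd E \<inter> sem ar k q = {}"

definition cq_contained :: "('r \<Rightarrow> nat) \<Rightarrow> nat \<Rightarrow> 'r cq \<Rightarrow> 'r cq \<Rightarrow> bool" where
  "cq_contained ar k q1 q2 \<longleftrightarrow> sem ar k q1 \<subseteq> sem ar k q2"

definition cq_equiv :: "('r \<Rightarrow> nat) \<Rightarrow> nat \<Rightarrow> 'r cq \<Rightarrow> 'r cq \<Rightarrow> bool" where
  "cq_equiv ar k q1 q2 \<longleftrightarrow> sem ar k q1 = sem ar k q2"

definition symdiff :: "'a set \<Rightarrow> 'a set \<Rightarrow> 'a set" where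
  "symdiff A B = (A - B) \<union> (B - A)"

definition cod_le :: "('r \<Rightarrow> nat) \<Rightarrow> nat \<Rightarrow> 'r cq \<Rightarrow> 'r cq \<Rightarrow> 'r cq \<Rightarrow> bool" where
  "cod_le ar k q q1 q2 \<longleftrightarrow> symdiff (sem ar k q) (sem ar k q1) \<subseteq> symdiff (sem ar k q) (sem ar k q2)"

definition cod_less :: "('r \<Rightarrow> nat) \<Rightarrow> nat \<Rightarrow> 'r cq \<Rightarrow> 'r cq \<Rightarrow> 'r cq \<Rightarrow> bool" where
  "cod_less ar k q q1 q2 \<longleftrightarrow> cod_le ar k q q1 q2 \<and> \<not> cod_le ar k q q2 q1"

definition sig :: "'r cq \<Rightarrow> 'r dexample set \<times> 'r dexample set \<Rightarrow> 'r set" where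
  "sig q E = rels (body q) \<union> (\<Union>e\<in>fst E \<union> snd E. rels (fst e))"

definition candidate :: "('r \<Rightarrow> nat) \<Rightarrow> nat \<Rightarrow> 'r cq \<Rightarrow> 'r dexample set \<times> 'r dexample set \<Rightarrow> 'r cq \<Rightarrow> bool" where
  "candidate ar k q E q' \<longleftrightarrow> wf_cq ar k q' \<and> rels (body q') \<subseteq> sig q E"

definition cod_generalization ::
  "('r \<Rightarrow> nat) \<Rightarrow> nat \<Rightarrow> 'r cq \<Rightarrow> 'r dexample set \<times> 'r dexample set \<Rightarrow> 'r cq \<Rightarrow> bool" where
  "cod_generalization ar k q E q' \<longleftrightarrow>
     candidate ar k q E q' \<and> fits ar k q' E \<and> cq_contained ar k q q' \<and>
     \<not> (\<exists>q''. candidate ar k q E q'' \<and> fits ar k q'' E \<and> cq_contained ar k q q''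
             \<and> cod_less ar k q q'' q')"

definition annotated_cq :: "('r \<Rightarrow> nat) \<Rightarrow> nat \<Rightarrow> 'r cq \<Rightarrow> 'r dexample set \<times> 'r dexample set \<Rightarrow> bool" where
  "annotated_cq ar k q E \<longleftrightarrow> wf_cq ar k q \<and> finite (fst E) \<and> finite (snd E)
     \<and> (\<forall>e\<in>fst E \<union> snd E. data_example ar k e)"

end

theory Submission
  imports Defs "HOL-Library.Countable"
begin

definition qhom :: "'r fact set \<Rightarrow> nat list \<Rightarrow> 'r fact set \<Rightarrow> nat list \<Rightarrow> bool" where
  "qhom C c D d \<longleftrightarrow> (\<exists>h. (\<forall>(R,xs)\<in>C. (R, map h xs) \<in> D) \<and> map h c = d)"

definition pfacts :: "'r fact set \<Rightarrow> 'r fact set \<Rightarrow> 'r fact set" where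
  "pfacts A I = {(R, map (\<lambda>p. to_nat (p::nat\<times>nat)) (zip xs ys)) | R xs ys.
      (R,xs)\<in>A \<and> (R,ys)\<in>I \<and> length xs = length ys}"

definition ptup :: "nat list \<Rightarrow> nat list \<Rightarrow> nat list" where
  "ptup a b = map (\<lambda>p. to_nat (p::nat\<times>nat)) (zip a b)"

fun prodL :: "'r fact set \<Rightarrow> nat list \<Rightarrow> 'r dexample list \<Rightarrow> 'r fact set \<times> nat list" where
  "prodL A a [] = (A, a)"
| "prodL A a ((I,b)#es) = prodL (pfacts A I) (ptup a b) es"

lemma qhom_trans: "qhom C c D d \<Longrightarrow> qhom D d F f \<Longrightarrow> qhom C c F f"
proof -
  assume "qhom C c D d" "qhom D d F f"
  then obtain g h where g: "\<forall>(R,xs)\<in>C. (R, map g xs) \<in> D" "map g c = d"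
    and h: "\<forall>(R,xs)\<in>D. (R, map h xs) \<in> F" "map h d = f"
    unfolding qhom_def by blast
  have "\<forall>(R,xs)\<in>C. (R, map (h \<circ> g) xs) \<in> F"
  proof (clarify)
    fix R xs assume "(R,xs) \<in> C"
    then have "(R, map g xs) \<in> D" using g by auto
    then have "(R, map h (map g xs)) \<in> F" using h by auto
    then show "(R, map (h \<circ> g) xs) \<in> F" by simp
  qed
  moreover have "map (h \<circ> g) c = f" using g(2) h(2) by (metis map_map)
  ultimately show ?thesis unfolding qhom_def by blast
qed

lemma fst_from_to: "fst (from_nat (to_nat (p::nat\<times>nat)) :: nat\<times>nat) = fst p" by simp
lemma snd_from_to: "snd (from_nat (to_nat (p::nat\<times>nat)) :: nat\<times>nat) = snd p" by simp

lemma pf_proj1: assumes "length a = length b" shows "qhom (pfacts A I) (ptup a b) A a"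
proof -
  let ?h = "\<lambda>v. fst (from_nat v :: nat\<times>nat)"
  have "\<forall>(R,xs)\<in>pfacts A I. (R, map ?h xs) \<in> A"
    unfolding pfacts_def by (auto simp: comp_def)
  moreover have "map ?h (ptup a b) = a" using assms unfolding ptup_def by (simp add: comp_def)
  ultimately show ?thesis unfolding qhom_def by blast
qed

lemma pf_proj2: assumes "length a = length b" shows "qhom (pfacts A I) (ptup a b) I b"
proof -
  let ?h = "\<lambda>v. snd (from_nat v :: nat\<times>nat)"
  have "\<forall>(R,xs)\<in>pfacts A I. (R, map ?h xs) \<in> I"
    unfolding pfacts_def by (auto simp: comp_def)
  moreover have "map ?h (ptup a b) = b" using assms unfolding ptup_def by (simp add: comp_def)
  ultimately show ?thesis unfolding qhom_def by blast
qed

lemma pf_univ: assumes "qhom C c A a" "qhom C c I b" shows "qhom C c (pfacts A I) (ptup a b)"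
proof -
  obtain g1 where g1: "\<forall>(R,xs)\<in>C. (R, map g1 xs) \<in> A" "map g1 c = a"
    using assms(1) unfolding qhom_def by blast
  obtain g2 where g2: "\<forall>(R,xs)\<in>C. (R, map g2 xs) \<in> I" "map g2 c = b"
    using assms(2) unfolding qhom_def by blast
  let ?g = "\<lambda>v. to_nat (g1 v, g2 v)"
  have m: "map ?g xs = map (\<lambda>p. to_nat (p::nat\<times>nat)) (zip (map g1 xs) (map g2 xs))" for xs
    by (induction xs) auto
  have "\<forall>(R,xs)\<in>C. (R, map ?g xs) \<in> pfacts A I"
  proof clarify
    fix R xs assume "(R,xs)\<in>C"
    then have "(R, map g1 xs) \<in> A" "(R, map g2 xs) \<in> I" using g1 g2 by auto
    then show "(R, map ?g xs) \<in> pfacts A I" unfolding pfacts_def m by fastforce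
  qed
  moreover have "map ?g c = ptup a b" unfolding ptup_def m[of c] g1 g2 ..
  ultimately show ?thesis unfolding qhom_def by blast
qed

lemma pf_rels: "rels (pfacts A I) \<subseteq> rels A"
  unfolding rels_def pfacts_def by force

lemma pf_ar: "\<forall>(R,xs)\<in>A. length xs = ar R \<Longrightarrow> \<forall>(R,xs)\<in>pfacts A I. length xs = ar R"
  unfolding pfacts_def by auto

lemma pf_fin: assumes "finite A" "finite I" shows "finite (pfacts A I)"
proof -
  have "pfacts A I \<subseteq> (\<lambda>((R,xs),(S,ys)). (R, map (\<lambda>p. to_nat (p::nat\<times>nat)) (zip xs ys))) ` (A \<times> I)"
    unfolding pfacts_def by force
  then show ?thesis using assms finite_subset by blast
qed

lemma ptup_len: "length (ptup a b) = min (length a) (length b)"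
  unfolding ptup_def by simp

lemma prodL_props:
  assumes "\<forall>(I,b)\<in>set es. length b = length a"
  shows "qhom (fst (prodL A a es)) (snd (prodL A a es)) A a
    \<and> (\<forall>(I,b)\<in>set es. qhom (fst (prodL A a es)) (snd (prodL A a es)) I b)
    \<and> length (snd (prodL A a es)) = length a
    \<and> rels (fst (prodL A a es)) \<subseteq> rels A
    \<and> ((\<forall>(R,xs)\<in>A. length xs = ar R) \<longrightarrow> (\<forall>(R,xs)\<in>fst (prodL A a es). length xs = ar R))
    \<and> (finite A \<and> (\<forall>(I,b)\<in>set es. finite I) \<longrightarrow> finite (fst (prodL A a es)))
    \<and> (\<forall>C c. qhom C c A a \<and> (\<forall>(I,b)\<in>set es. qhom C c I b) \<longrightarrow> qhom C c (fst (prodL A a es)) (snd (prodL A a es)))"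
  using assms
proof (induction es arbitrary: A a)
  case Nil
  then show ?case by (auto simp: qhom_def intro: exI[of _ id])
next
  case (Cons e es)
  obtain I b where e: "e = (I,b)" by fastforce
  have lb: "length b = length a" using Cons.prems e by auto
  have lp: "length (ptup a b) = length a" using lb ptup_len by simp
  have pr: "\<forall>(J,c)\<in>set es. length c = length (ptup a b)" using Cons.prems lp by auto
  note IH = Cons.IH[OF pr, of "pfacts A I"]
  let ?P = "fst (prodL (pfacts A I) (ptup a b) es)" and ?p = "snd (prodL (pfacts A I) (ptup a b) es)"
  have I1: "qhom ?P ?p (pfacts A I) (ptup a b)" using IH by (rule conjunct1)
  have I2: "\<forall>(J,c)\<in>set es. qhom ?P ?p J c" using IH[THEN conjunct2] by (rule conjunct1)
  have I3: "length ?p = length (ptup a b)" using IH[THEN conjunct2, THEN conjunct2] by (rule conjunct1)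
  have I4: "rels ?P \<subseteq> rels (pfacts A I)" using IH[THEN conjunct2, THEN conjunct2, THEN conjunct2] by (rule conjunct1)
  have I5: "(\<forall>(R,xs)\<in>pfacts A I. length xs = ar R) \<longrightarrow> (\<forall>(R,xs)\<in>?P. length xs = ar R)"
    using IH[THEN conjunct2, THEN conjunct2, THEN conjunct2, THEN conjunct2] by (rule conjunct1)
  have I6: "finite (pfacts A I) \<and> (\<forall>(J,c)\<in>set es. finite J) \<longrightarrow> finite ?P"
    using IH[THEN conjunct2, THEN conjunct2, THEN conjunct2, THEN conjunct2, THEN conjunct2] by (rule conjunct1)
  have I7: "\<forall>C c. qhom C c (pfacts A I) (ptup a b) \<and> (\<forall>(J,c')\<in>set es. qhom C c J c') \<longrightarrow> qhom C c ?P ?p"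
    using IH[THEN conjunct2, THEN conjunct2, THEN conjunct2, THEN conjunct2, THEN conjunct2] by (rule conjunct2)
  have A1: "qhom ?P ?p A a" using qhom_trans[OF I1 pf_proj1[OF lb[symmetric]]] .
  have A2: "qhom ?P ?p I b" using qhom_trans[OF I1 pf_proj2[OF lb[symmetric]]] .
  have A3: "rels ?P \<subseteq> rels A" using I4 pf_rels[of A I] by (rule subset_trans)
  have A4: "(\<forall>(R,xs)\<in>A. length xs = ar R) \<longrightarrow> (\<forall>(R,xs)\<in>?P. length xs = ar R)"
  proof
    assume "\<forall>(R,xs)\<in>A. length xs = ar R"
    then have "\<forall>(R,xs)\<in>pfacts A I. length xs = ar R" by (rule pf_ar)
    then show "\<forall>(R,xs)\<in>?P. length xs = ar R" using I5 by (rule rev_mp)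
  qed
  have A5: "finite A \<and> (\<forall>(J,c)\<in>set (e#es). finite J) \<longrightarrow> finite ?P"
  proof
    assume H: "finite A \<and> (\<forall>(J,c)\<in>set (e#es). finite J)"
    then have "finite I" using e by auto
    then have "finite (pfacts A I)" using H pf_fin by blast
    moreover have "\<forall>(J,c)\<in>set es. finite J" using H by auto
    ultimately show "finite ?P" using I6 by blast
  qed
  have A6: "\<forall>C c. qhom C c A a \<and> (\<forall>(J,c')\<in>set (e#es). qhom C c J c') \<longrightarrow> qhom C c ?P ?p"
  proof (intro allI impI)
    fix C c assume H: "qhom C c A a \<and> (\<forall>(J,c')\<in>set (e#es). qhom C c J c')"
    then have "qhom C c (pfacts A I) (ptup a b)" using pf_univ e by auto
    moreover have "\<forall>(J,c')\<in>set es. qhom C c J c'" using H by auto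
    ultimately show "qhom C c ?P ?p" using I7 by blast
  qed
  have A7: "length ?p = length a" using I3 lp by simp
  have A2': "\<forall>(J,c)\<in>set (e#es). qhom ?P ?p J c" using A2 I2 e by auto
  show ?case unfolding e prodL.simps using A1 A2' A3 A4 A5 A6 A7 e by simp
qed

lemma sem_qhom: "e \<in> sem ar k q \<longleftrightarrow> data_example ar k e \<and> qhom (body q) (ans q) (fst e) (snd e)"
  unfolding sem_def answers_def qhom_def by (auto; metis)

lemma canon_in_sem: assumes "wf_cq ar k q" shows "(body q, ans q) \<in> sem ar k q"
proof -
  have "data_example ar k (body q, ans q)" using assms
    unfolding data_example_def wf_cq_def wf_inst_def by auto
  moreover have "qhom (body q) (ans q) (body q) (ans q)"
    unfolding qhom_def by (rule exI[of _ id]) auto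
  ultimately show ?thesis using sem_qhom by fastforce
qed

lemma contained_qhom: assumes "wf_cq ar k q1" "cq_contained ar k q1 q2"
  shows "qhom (body q2) (ans q2) (body q1) (ans q1)"
proof -
  have "(body q1, ans q1) \<in> sem ar k q2" using canon_in_sem[OF assms(1)] assms(2) unfolding cq_contained_def by blast
  then show ?thesis unfolding sem_qhom by simp
qed

lemma qhom_contained: assumes "qhom (body q2) (ans q2) (body q1) (ans q1)"
  shows "cq_contained ar k q1 q2"
  unfolding cq_contained_def
proof
  fix e assume "e \<in> sem ar k q1"
  then have "data_example ar k e" "qhom (body q1) (ans q1) (fst e) (snd e)" unfolding sem_qhom by auto
  then show "e \<in> sem ar k q2" unfolding sem_qhom using qhom_trans[OF assms] by blast
qed

lemma symdiff_sub: assumes "S \<subseteq> A" "S \<subseteq> B" shows "symdiff S A \<subseteq> symdiff S B \<longleftrightarrow> A \<subseteq> B"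
  using assms unfolding symdiff_def by blast

theorem corollary9:
  fixes ar :: "'r \<Rightarrow> nat" and k :: nat and q :: "'r cq"
    and E :: "'r dexample set \<times> 'r dexample set"
  assumes "annotated_cq ar k q E"
    and "\<exists>q'. wf_cq ar k q' \<and> fits ar k q' E \<and> cq_contained ar k q q'"
  shows "\<exists>q'. cod_generalization ar k q E q'
           \<and> (\<forall>q''. cod_generalization ar k q E q'' \<longrightarrow> cq_equiv ar k q'' q')"
proof -
  have wq: "wf_cq ar k q" and finP: "finite (fst E)" and dex: "\<forall>e\<in>fst E \<union> snd E. data_example ar k e"
    using assms(1) unfolding annotated_cq_def by auto
  obtain es where es: "set es = fst E" using finite_list[OF finP] by blast
  have lens: "\<forall>(I,b)\<in>set es. length b = length (ans q)"
  proof clarify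
    fix I b assume "(I,b) \<in> set es"
    then have "data_example ar k (I,b)" using es dex by auto
    then show "length b = length (ans q)" using wq unfolding data_example_def wf_cq_def by auto
  qed
  define Q where "Q = (snd (prodL (body q) (ans q) es), fst (prodL (body q) (ans q) es))"
  have bQ: "body Q = fst (prodL (body q) (ans q) es)" and aQ: "ans Q = snd (prodL (body q) (ans q) es)"
    unfolding Q_def body_def ans_def by auto
  note PP = prodL_props[OF lens, of "body q" ar, folded bQ aQ]
  have P1: "qhom (body Q) (ans Q) (body q) (ans q)" using PP by (rule conjunct1)
  have P2: "\<forall>(J,c)\<in>set es. qhom (body Q) (ans Q) J c" using PP[THEN conjunct2] by (rule conjunct1)
  have P3: "length (ans Q) = length (ans q)" using PP[THEN conjunct2, THEN conjunct2] by (rule conjunct1)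
  have P4: "rels (body Q) \<subseteq> rels (body q)" using PP[THEN conjunct2, THEN conjunct2, THEN conjunct2] by (rule conjunct1)
  have P5: "(\<forall>(R,xs)\<in>body q. length xs = ar R) \<longrightarrow> (\<forall>(R,xs)\<in>body Q. length xs = ar R)"
    using PP[THEN conjunct2, THEN conjunct2, THEN conjunct2, THEN conjunct2] by (rule conjunct1)
  have P6: "finite (body q) \<and> (\<forall>(J,c)\<in>set es. finite J) \<longrightarrow> finite (body Q)"
    using PP[THEN conjunct2, THEN conjunct2, THEN conjunct2, THEN conjunct2, THEN conjunct2] by (rule conjunct1)
  have P7: "\<forall>C c. qhom C c (body q) (ans q) \<and> (\<forall>(J,c')\<in>set es. qhom C c J c') \<longrightarrow> qhom C c (body Q) (ans Q)"
    using PP[THEN conjunct2, THEN conjunct2, THEN conjunct2, THEN conjunct2, THEN conjunct2] by (rule conjunct2)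
  have univ: "qhom (body q') (ans q') (body Q) (ans Q)"
    if "wf_cq ar k q'" "fits ar k q' E" "cq_contained ar k q q'" for q'
  proof -
    have "qhom (body q') (ans q') (body q) (ans q)" using contained_qhom[OF wq that(3)] .
    moreover have "\<forall>(I,b)\<in>set es. qhom (body q') (ans q') I b"
    proof clarify
      fix I b assume "(I,b) \<in> set es"
      then have "(I,b) \<in> sem ar k q'" using that(2) es unfolding fits_def by blast
      then show "qhom (body q') (ans q') I b" unfolding sem_qhom by simp
    qed
    ultimately show ?thesis using P7 by blast
  qed
  have semle: "sem ar k Q \<subseteq> sem ar k q'"
    if "wf_cq ar k q'" "fits ar k q' E" "cq_contained ar k q q'" for q'
    using qhom_contained[OF univ[OF that]] unfolding cq_contained_def .
  obtain q0 where q0: "wf_cq ar k q0" "fits ar k q0 E" "cq_contained ar k q q0" using assms(2) by blast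
  have wQ: "wf_cq ar k Q"
  proof -
    have "length (ans Q) = k" using P3 wq unfolding wf_cq_def by simp
    moreover have "finite (body Q)"
    proof -
      have "\<forall>(J,c)\<in>set es. finite J"
      proof clarify
        fix J c assume "(J,c) \<in> set es"
        then have "data_example ar k (J,c)" using es dex by auto
        then show "finite J" unfolding data_example_def wf_inst_def by simp
      qed
      moreover have "finite (body q)" using wq unfolding wf_cq_def by simp
      ultimately show ?thesis using P6 by blast
    qed
    moreover have "\<forall>(R,xs)\<in>body Q. length xs = ar R" using P5 wq unfolding wf_cq_def by blast
    moreover have "set (ans Q) \<subseteq> adom (body Q)"
    proof
      fix y assume y: "y \<in> set (ans Q)"
      obtain g where g: "\<forall>(R,xs)\<in>body q0. (R, map g xs) \<in> body Q" "map g (ans q0) = ans Q"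
        using univ[OF q0] unfolding qhom_def by blast
      have "y \<in> set (map g (ans q0))" using y g(2) by simp
      then obtain x where x: "x \<in> set (ans q0)" "y = g x" by auto
      then have "x \<in> adom (body q0)" using q0(1) unfolding wf_cq_def by auto
      then obtain R xs where "(R,xs)\<in>body q0" "x \<in> set xs" unfolding adom_def by auto
      then have "(R, map g xs) \<in> body Q" "y \<in> set (map g xs)" using g x by auto
      then show "y \<in> adom (body Q)" unfolding adom_def by (intro UN_I[of "(R, map g xs)"]) auto
    qed
    ultimately show ?thesis unfolding wf_cq_def by blast
  qed
  have cQ: "candidate ar k q E Q"
    using wQ P4 unfolding candidate_def sig_def by blast
  have fQ: "fits ar k Q E"
  proof -
    have "fst E \<subseteq> sem ar k Q"
    proof
      fix e assume e: "e \<in> fst E"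
      obtain I b where eI: "e = (I,b)" by fastforce
      have "qhom (body Q) (ans Q) I b" using P2 e es eI by blast
      then show "e \<in> sem ar k Q" using dex e eI sem_qhom by fastforce
    qed
    moreover have "snd E \<inter> sem ar k Q = {}" using semle[OF q0] q0(2) unfolding fits_def by blast
    ultimately show ?thesis unfolding fits_def by blast
  qed
  have inQ: "cq_contained ar k q Q"
    using P1 by (rule qhom_contained)
  have key: "cod_le ar k q Q q''" if "candidate ar k q E q''" "fits ar k q'' E" "cq_contained ar k q q''" for q''
  proof -
    have "sem ar k Q \<subseteq> sem ar k q''" using semle that unfolding candidate_def by blast
    then show ?thesis using symdiff_sub inQ that(3) unfolding cod_le_def cq_contained_def by blast
  qed
  have gQ: "cod_generalization ar k q E Q"
    unfolding cod_generalization_def cod_less_def using cQ fQ inQ key by blast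
  moreover have "\<forall>q''. cod_generalization ar k q E q'' \<longrightarrow> cq_equiv ar k q'' Q"
  proof (intro allI impI)
    fix q'' assume g: "cod_generalization ar k q E q''"
    then have c: "candidate ar k q E q''" "fits ar k q'' E" "cq_contained ar k q q''"
      unfolding cod_generalization_def by auto
    have le: "cod_le ar k q Q q''" using key[OF c] .
    have "cod_le ar k q q'' Q" using g cQ fQ inQ le unfolding cod_generalization_def cod_less_def by blast
    then have "sem ar k q'' \<subseteq> sem ar k Q" using symdiff_sub inQ c(3) unfolding cod_le_def cq_contained_def by blast
    moreover have "sem ar k Q \<subseteq> sem ar k q''" using semle c unfolding candidate_def by blast
    ultimately show "cq_equiv ar k q'' Q" unfolding cq_equiv_def by blast
  qed
  ultimately show ?thesis by blast
qed

end
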